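(* Let $\alpha>\frac12$ and run Algorithm 1 with $x_0=0$, gradients satisfying $\|g_t\|\le G$, and learning rates $\eta_t=\frac{1}{Gt^\alpha}$. Then for every $T\ge0$, $$S_T\le\sqrt{5+\tfrac{1}{2\alpha-1}},\qquad Q_T\le\ln\Big(5+\tfrac{1}{2\alpha-1}\Big),$$ and for every $T\ge1$ and $u\in\mathbb{R}^d$, $$\phi_T(u)\le\sqrt{5+\tfrac{1}{2\alpha-1}}\;\|u\|\Big[2\ln(1+2\|u\|)+9\sqrt{5+\tfrac{1}{2\alpha-1}}\Big].$$
   Context: $\|\cdot\|$ is the Euclidean norm, $G>0$. Auxiliary functions: $\psi^*(\theta,S,Q)=\exp\big(\max_{\beta\in[-1/2,1/2]}(\theta\beta-\beta^2S^2)-Q\big)$ for $\theta\in\mathbb{R},S>0,Q\ge0$; $\psi(x,S,Q)=\sup_{\theta\in\mathbb{R}}(\theta x-\psi^*(\theta,S,Q))$. Algorithm 1 with $x_0=0$: $S_0^2=4$, $Q_0=0$, $\theta_0=0$. For $t=1,2,\dots$: $\phi_t(x)=\psi(\|x\|,S_{t-1},Q_{t-1})$; $x_t$ is the unique minimizer of $\phi_t(x)-\langle\theta_{t-1},x\rangle$; receive $g_t$; $\ell_t=\eta_tg_t$, $S_t^2=S_{t-1}^2+\|\ell_t\|^2$ ($S_t>0$), $Q_t=Q_{t-1}+\|\ell_t\|^2/S_t^2$, $\theta_t=\theta_{t-1}-\ell_t$. *)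

theory Defs
  imports "HOL-Analysis.Analysis"
begin

definition psi_star :: "real \<Rightarrow> real \<Rightarrow> real \<Rightarrow> real" where
  "psi_star \<theta> S Q = exp (Sup ((\<lambda>\<beta>. \<theta> * \<beta> - \<beta>\<^sup>2 * S\<^sup>2) ` {-1/2..1/2}) - Q)"

definition psi :: "real \<Rightarrow> real \<Rightarrow> real \<Rightarrow> real" where
  "psi x S Q = Sup (range (\<lambda>\<theta>. \<theta> * x - psi_star \<theta> S Q))"

text \<open>Algorithm 1 state. Rounds t = 1,2,...; g t is the gradient received at round t,
  \<eta> t the learning rate; \<ell>_t = \<eta>_t g_t.\<close>
fun alg_Ssq :: "(nat \<Rightarrow> real) \<Rightarrow> (nat \<Rightarrow> 'a::real_normed_vector) \<Rightarrow> nat \<Rightarrow> real" where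
  "alg_Ssq \<eta> g 0 = 4"
| "alg_Ssq \<eta> g (Suc t) = alg_Ssq \<eta> g t + (norm (\<eta> (Suc t) *\<^sub>R g (Suc t)))\<^sup>2"

definition alg_S :: "(nat \<Rightarrow> real) \<Rightarrow> (nat \<Rightarrow> 'a::real_normed_vector) \<Rightarrow> nat \<Rightarrow> real" where
  "alg_S \<eta> g t = sqrt (alg_Ssq \<eta> g t)"

fun alg_Q :: "(nat \<Rightarrow> real) \<Rightarrow> (nat \<Rightarrow> 'a::real_normed_vector) \<Rightarrow> nat \<Rightarrow> real" where
  "alg_Q \<eta> g 0 = 0"
| "alg_Q \<eta> g (Suc t) = alg_Q \<eta> g t
     + (norm (\<eta> (Suc t) *\<^sub>R g (Suc t)))\<^sup>2 / (alg_S \<eta> g (Suc t))\<^sup>2"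

definition alg_phi :: "(nat \<Rightarrow> real) \<Rightarrow> (nat \<Rightarrow> 'a::real_normed_vector) \<Rightarrow> nat \<Rightarrow> 'a \<Rightarrow> real" where
  "alg_phi \<eta> g t x = psi (norm x) (alg_S \<eta> g (t - 1)) (alg_Q \<eta> g (t - 1))"

end

theory Submission
  imports Defs
begin

lemma psi_star_lb:
  fixes \<theta> S Q :: real
  shows "psi_star \<theta> S Q \<ge> exp (max 0 (\<theta>/2 - S\<^sup>2/4) - Q)"
proof -
  let ?f = "\<lambda>\<beta>::real. \<theta> * \<beta> - \<beta>\<^sup>2 * S\<^sup>2"
  have bdd: "bdd_above (?f ` {-1/2..1/2})"
  proof (rule bdd_aboveI2)
    fix \<beta> :: real assume b: "\<beta> \<in> {-1/2..1/2}"
    have "\<theta> * \<beta> \<le> \<bar>\<theta>\<bar> * \<bar>\<beta>\<bar>" by (metis abs_ge_self abs_mult)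
    also have "\<dots> \<le> \<bar>\<theta>\<bar> * (1/2)" using b by (intro mult_left_mono) auto
    finally have "\<theta> * \<beta> \<le> \<bar>\<theta>\<bar>/2" by simp
    moreover have "\<beta>\<^sup>2 * S\<^sup>2 \<ge> 0" by simp
    ultimately show "?f \<beta> \<le> \<bar>\<theta>\<bar>/2" by linarith
  qed
  have i0: "?f 0 \<in> ?f ` {-1/2..1/2}" by (rule imageI) simp
  have i1: "?f (1/2) \<in> ?f ` {-1/2..1/2}" by (rule imageI) simp
  have "?f 0 \<le> Sup (?f ` {-1/2..1/2})" by (rule cSup_upper[OF i0 bdd])
  moreover have "?f (1/2) \<le> Sup (?f ` {-1/2..1/2})" by (rule cSup_upper[OF i1 bdd])
  moreover have "?f (1/2) = \<theta>/2 - S\<^sup>2/4" by (simp add: power2_eq_square)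
  ultimately have "max 0 (\<theta>/2 - S\<^sup>2/4) \<le> Sup (?f ` {-1/2..1/2})"
    by (simp only: max_def) (auto split: if_splits)
  then show ?thesis unfolding psi_star_def by simp
qed

lemma psi_bound:
  fixes x S Q B :: real
  assumes x: "x \<ge> 0" and S: "S\<^sup>2 \<le> B" and Q: "Q \<le> ln B" and B: "B \<ge> 5"
  shows "psi x S Q \<le> sqrt B * x * (2 * ln (1 + 2 * x) + 9 * sqrt B)"
  unfolding psi_def
proof (rule cSup_least)
  show "range (\<lambda>\<theta>. \<theta> * x - psi_star \<theta> S Q) \<noteq> {}" by simp
next
  fix v assume "v \<in> range (\<lambda>\<theta>. \<theta> * x - psi_star \<theta> S Q)"
  then obtain \<theta> where v: "v = \<theta> * x - psi_star \<theta> S Q" by auto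
  define y0 where "y0 = ln (1 + 2*x)"
  have y0: "y0 \<ge> 0" using x by (simp add: y0_def)
  have sB: "sqrt B \<ge> 1" using B by simp
  have sBB: "sqrt B * sqrt B = B" using B by simp
  have R0: "0 \<le> sqrt B * x * (2 * ln (1 + 2 * x) + 9 * sqrt B)"
    using x sB y0 unfolding y0_def by simp
  have ps: "psi_star \<theta> S Q \<ge> exp (max 0 (\<theta>/2 - S\<^sup>2/4) - Q)" by (rule psi_star_lb)
  show "v \<le> sqrt B * x * (2 * ln (1 + 2 * x) + 9 * sqrt B)"
  proof (cases "\<theta> \<le> 0")
    case True
    have "\<theta> * x \<le> 0" using True x by (simp add: mult_nonpos_nonneg)
    moreover have "psi_star \<theta> S Q > 0" using ps exp_gt_zero[of "max 0 (\<theta>/2 - S\<^sup>2/4) - Q"] by linarith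
    ultimately show ?thesis using v R0 by linarith
  next
    case False
    define c where "c = S\<^sup>2/4 + Q"
    define y where "y = \<theta>/2 - c"
    have "exp y \<le> exp (max 0 (\<theta>/2 - S\<^sup>2/4) - Q)" unfolding y_def c_def by simp
    hence ey: "psi_star \<theta> S Q \<ge> exp y" using ps by linarith
    have e1: "exp (y - y0) \<ge> 1 + (y - y0)" by (rule exp_ge_add_one_self)
    have e0: "exp y0 = 1 + 2*x" using x by (simp add: y0_def)
    have "exp y = exp y0 * exp (y - y0)" by (simp add: exp_add[symmetric])
    hence ey2: "exp y \<ge> (1 + 2*x) * (1 + (y - y0))"
      using e1 e0 x by (simp add: mult_left_mono)
    have ey3: "exp y \<ge> 2*x * (1 + (y - y0))"
    proof (cases "1 + (y - y0) \<ge> 0")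
      case True
      then show ?thesis using ey2 mult_right_mono[of "2*x" "1+2*x" "1+(y-y0)"] by linarith
    next
      case False
      then have "2*x * (1 + (y - y0)) \<le> 0" using x by (simp add: mult_nonneg_nonpos)
      then show ?thesis using exp_gt_zero[of y] by linarith
    qed
    have lnB: "ln B \<le> B" using B using ln_le_minus_one[of B] by linarith
    have c: "c \<le> B/4 + B" using S Q lnB unfolding c_def by linarith
    have tx: "\<theta> * x = 2*x*y + 2*x*c" unfolding y_def by (simp add: algebra_simps)
    have ex: "2*x*(1+(y-y0)) = 2*x + 2*x*y - 2*x*y0" by (simp add: algebra_simps)
    have "v \<le> 2*x*y0 + 2*x*c" using v tx ey ey3 ex x by linarith
    also have "\<dots> \<le> 2*x*y0 + 2*x*(B/4 + B)"
    proof -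
      have "2*x*c \<le> 2*x*(B/4 + B)" by (rule mult_left_mono[OF c]) (use x in simp)
      thus ?thesis by linarith
    qed
    also have "\<dots> \<le> sqrt B * x * (2 * y0) + 9 * x * B"
    proof -
      have "x*(2*y0) \<ge> 0" using x y0 by simp
      from mult_right_mono[OF sB this] have "1 * (x*(2*y0)) \<le> sqrt B * (x * (2*y0))" .
      moreover have "2*x*y0 = 1 * (x*(2*y0))" by simp
      ultimately have "2*x*y0 \<le> sqrt B * (x * (2*y0))" by linarith
      moreover have "2*x*(B/4+B) \<le> 9*x*B" using x B by (simp add: algebra_simps)
      ultimately show ?thesis by (simp add: algebra_simps)
    qed
    also have "\<dots> = sqrt B * x * (2 * ln (1 + 2 * x) + 9 * sqrt B)"
      unfolding y0_def using sBB by (simp add: algebra_simps)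
    finally show ?thesis .
  qed
qed


lemma step_ineq:
  fixes p T :: real
  assumes p: "p > 1" and T: "T \<ge> 1"
  shows "(T+1) powr (-p) \<le> (T powr (1-p) - (T+1) powr (1-p)) / (p-1)"
proof -
  define L0 where "L0 = ln T"
  define L1 where "L1 = ln (T+1)"
  have T0: "T > 0" using T by simp
  have pw: "T powr (1-p) = exp ((1-p)*L0)" "(T+1) powr (1-p) = exp ((1-p)*L1)"
     "(T+1) powr (-p) = exp ((-p)*L1)"
    using T0 by (simp_all add: powr_def L0_def L1_def mult.commute)
  define E where "E = exp ((1-p)*L1)"
  have E0: "E > 0" by (simp add: E_def)
  have e1: "exp ((1-p)*L0) = E * exp ((p-1)*(L1-L0))"
    unfolding E_def by (simp add: exp_add[symmetric] algebra_simps)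
  have e2: "exp ((-p)*L1) = E / (T+1)"
  proof -
    have "exp ((-p)*L1) = E * exp (-L1)" unfolding E_def by (simp add: exp_add[symmetric] algebra_simps)
    also have "exp (-L1) = 1/(T+1)" unfolding L1_def using T0 by (simp add: exp_minus inverse_eq_divide)
    finally show ?thesis by simp
  qed
  have lnd: "L1 - L0 \<ge> 1/(T+1)"
  proof -
    have "ln (T/(T+1)) \<le> T/(T+1) - 1" using T0 by (intro ln_le_minus_one) simp
    moreover have "ln (T/(T+1)) = L0 - L1" using T0 by (simp add: ln_div L0_def L1_def)
    moreover have "T/(T+1) - 1 = -1/(T+1)" using T0 by (simp add: field_simps)
    ultimately show ?thesis by linarith
  qed
  have "exp ((p-1)*(L1-L0)) \<ge> 1 + (p-1)*(L1-L0)" by (rule exp_ge_add_one_self)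
  moreover have "(p-1)*(L1-L0) \<ge> (p-1)*(1/(T+1))" using lnd p by (intro mult_left_mono) auto
  moreover have "(p-1)*(1/(T+1)) = (p-1)/(T+1)" by simp
  ultimately have "exp ((p-1)*(L1-L0)) \<ge> 1 + (p-1)/(T+1)" by linarith
  hence "E * exp ((p-1)*(L1-L0)) \<ge> E * (1 + (p-1)/(T+1))" using E0 by (intro mult_left_mono) auto
  hence "exp ((1-p)*L0) - E \<ge> (p-1) * (E/(T+1))" using e1 by (simp add: algebra_simps)
  hence "(p-1) * exp ((-p)*L1) \<le> exp ((1-p)*L0) - E" using e2 by simp
  hence "exp ((-p)*L1) \<le> (exp ((1-p)*L0) - E) / (p-1)" using p by (simp add: field_simps)
  then show ?thesis using pw by (simp add: E_def)
qed

lemma ell_bound: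
  fixes G \<alpha> :: real and g :: "nat \<Rightarrow> 'a::real_normed_vector" and \<eta> :: "nat \<Rightarrow> real"
  assumes G: "G > 0" and g: "\<forall>t\<ge>1. norm (g t) \<le> G"
    and eta: "\<forall>t\<ge>1. \<eta> t = 1 / (G * real t powr \<alpha>)" and t: "t \<ge> 1"
  shows "(norm (\<eta> t *\<^sub>R g t))\<^sup>2 \<le> real t powr (-(2*\<alpha>))"
proof -
  have tp: "real t powr \<alpha> > 0" using t by simp
  have et: "\<eta> t = 1 / (G * real t powr \<alpha>)" using eta t by simp
  have ep: "\<eta> t > 0" using et G tp by simp
  have "norm (\<eta> t *\<^sub>R g t) = \<eta> t * norm (g t)" using ep by simp
  also have "\<dots> \<le> \<eta> t * G" using g t ep by (intro mult_left_mono) auto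
  also have "\<dots> = 1 / real t powr \<alpha>" using et G by simp
  finally have n: "norm (\<eta> t *\<^sub>R g t) \<le> 1 / real t powr \<alpha>" .
  have "(norm (\<eta> t *\<^sub>R g t))\<^sup>2 \<le> (1 / real t powr \<alpha>)\<^sup>2"
    using n by (intro power_mono) auto
  also have "(1 / real t powr \<alpha>)\<^sup>2 = real t powr (-(2*\<alpha>))"
  proof -
    have "(real t powr \<alpha>)\<^sup>2 = real t powr (2*\<alpha>)"
      by (simp add: power2_eq_square powr_add[symmetric])
    thus ?thesis using t by (simp add: power_divide powr_minus divide_inverse power_inverse)
  qed
  finally show ?thesis .
qed

lemma Ssq_ge4: "alg_Ssq \<eta> g T \<ge> 4"
  by (induction T) (auto intro: order_trans[OF _ le_add_same_cancel1[THEN iffD2]])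

lemma Ssq_bound:
  fixes G \<alpha> :: real and g :: "nat \<Rightarrow> 'a::real_normed_vector" and \<eta> :: "nat \<Rightarrow> real"
  assumes a: "\<alpha> > 1/2" and G: "G > 0" and g: "\<forall>t\<ge>1. norm (g t) \<le> G"
    and eta: "\<forall>t\<ge>1. \<eta> t = 1 / (G * real t powr \<alpha>)"
  shows "alg_Ssq \<eta> g (Suc n) \<le> 5 + 1/(2*\<alpha>-1) - real (Suc n) powr (1-2*\<alpha>)/(2*\<alpha>-1)"
proof (induction n)
  case 0
  have "(norm (\<eta> 1 *\<^sub>R g 1))\<^sup>2 \<le> real 1 powr (-(2*\<alpha>))"
    by (rule ell_bound[OF G g eta]) simp
  then show ?case by simp
next
  case (Suc n)
  have l: "(norm (\<eta> (Suc (Suc n)) *\<^sub>R g (Suc (Suc n))))\<^sup>2 \<le> real (Suc (Suc n)) powr (-(2*\<alpha>))"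
    by (rule ell_bound[OF G g eta]) simp
  have st: "(real (Suc n)+1) powr (-(2*\<alpha>)) \<le> (real (Suc n) powr (1-2*\<alpha>) - (real (Suc n)+1) powr (1-2*\<alpha>)) / (2*\<alpha>-1)"
    using step_ineq[of "2*\<alpha>" "real (Suc n)"] a by simp
  have e: "real (Suc (Suc n)) = real (Suc n) + 1" by simp
  have d: "(real (Suc n) powr (1-2*\<alpha>) - (real (Suc n)+1) powr (1-2*\<alpha>)) / (2*\<alpha>-1)
      = real (Suc n) powr (1-2*\<alpha>) / (2*\<alpha>-1) - (real (Suc n)+1) powr (1-2*\<alpha>) / (2*\<alpha>-1)"
    by (simp add: diff_divide_distrib)
  show ?case using Suc.IH l st d unfolding e by simp
qed

lemma Ssq_B:
  fixes G \<alpha> :: real and g :: "nat \<Rightarrow> 'a::real_normed_vector" and \<eta> :: "nat \<Rightarrow> real"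
  assumes a: "\<alpha> > 1/2" and G: "G > 0" and g: "\<forall>t\<ge>1. norm (g t) \<le> G"
    and eta: "\<forall>t\<ge>1. \<eta> t = 1 / (G * real t powr \<alpha>)"
  shows "alg_Ssq \<eta> g T \<le> 5 + 1/(2*\<alpha>-1)"
proof (cases T)
  case 0
  have "1/(2*\<alpha>-1) > 0" using a by simp
  then show ?thesis using 0 by simp
next
  case (Suc n)
  have "real (Suc n) powr (1-2*\<alpha>)/(2*\<alpha>-1) \<ge> 0" using a by simp
  then show ?thesis unfolding Suc using Ssq_bound[OF a G g eta, of n] by linarith
qed

lemma Q_bound: "alg_Q \<eta> g T \<le> ln (alg_Ssq \<eta> g T / 4)"
proof (induction T)
  case 0
  then show ?case by simp
next
  case (Suc T)
  define s where "s = alg_Ssq \<eta> g T"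
  define d where "d = (norm (\<eta> (Suc T) *\<^sub>R g (Suc T)))\<^sup>2"
  have s4: "s \<ge> 4" unfolding s_def by (rule Ssq_ge4)
  have d0: "d \<ge> 0" unfolding d_def by simp
  have Ss: "alg_Ssq \<eta> g (Suc T) = s + d" by (simp add: s_def d_def)
  have S2: "(alg_S \<eta> g (Suc T))\<^sup>2 = s + d" unfolding alg_S_def Ss using s4 d0 by simp
  have Q0: "alg_Q \<eta> g (Suc T) = alg_Q \<eta> g T + d / (alg_S \<eta> g (Suc T))\<^sup>2" by (simp add: d_def)
  have Q: "alg_Q \<eta> g (Suc T) = alg_Q \<eta> g T + d / (s + d)" using Q0 S2 by simp
  have "ln (s/(s+d)) \<le> s/(s+d) - 1" using s4 d0 by (intro ln_le_minus_one) simp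
  moreover have "ln (s/(s+d)) = ln (s/4) - ln ((s+d)/4)" using s4 d0 by (simp add: ln_div)
  moreover have "s/(s+d) - 1 = - (d/(s+d))" using s4 d0 by (simp add: field_simps)
  ultimately have "d/(s+d) \<le> ln ((s+d)/4) - ln (s/4)" by linarith
  moreover have "alg_Q \<eta> g T \<le> ln (s/4)" using Suc.IH by (simp add: s_def)
  ultimately show ?case unfolding Q Ss by linarith
qed

theorem lemma5:
  fixes \<alpha> G :: real and g :: "nat \<Rightarrow> 'a::euclidean_space" and \<eta> :: "nat \<Rightarrow> real"
  assumes "\<alpha> > 1/2" and "G > 0"
    and "\<forall>t\<ge>1. norm (g t) \<le> G"
    and "\<forall>t\<ge>1. \<eta> t = 1 / (G * real t powr \<alpha>)"
  shows "(\<forall>T. alg_S \<eta> g T \<le> sqrt (5 + 1 / (2*\<alpha> - 1))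
             \<and> alg_Q \<eta> g T \<le> ln (5 + 1 / (2*\<alpha> - 1)))
       \<and> (\<forall>T\<ge>1. \<forall>u::'a. alg_phi \<eta> g T u \<le> sqrt (5 + 1 / (2*\<alpha> - 1)) * norm u *
             (2 * ln (1 + 2 * norm u) + 9 * sqrt (5 + 1 / (2*\<alpha> - 1))))"
proof -
  define B where "B = 5 + 1 / (2*\<alpha> - 1)"
  have B5: "B \<ge> 5" using assms(1) by (simp add: B_def)
  have SB: "\<And>T. alg_Ssq \<eta> g T \<le> B" unfolding B_def by (rule Ssq_B[OF assms])
  have S: "\<And>T. alg_S \<eta> g T \<le> sqrt B" unfolding alg_S_def using SB by simp
  have QB: "\<And>T. alg_Q \<eta> g T \<le> ln B"
  proof -
    fix T
    have s4: "alg_Ssq \<eta> g T \<ge> 4" by (rule Ssq_ge4)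
    have "ln (alg_Ssq \<eta> g T / 4) \<le> ln (B/4)" using s4 SB[of T] by simp
    also have "\<dots> \<le> ln B" using B5 by simp
    finally show "alg_Q \<eta> g T \<le> ln B" using Q_bound[of \<eta> g T] by linarith
  qed
  have S2: "\<And>T. (alg_S \<eta> g T)\<^sup>2 \<le> B"
    unfolding alg_S_def
  proof -
    fix T
    have "alg_Ssq \<eta> g T \<ge> 0" using Ssq_ge4[of \<eta> g T] by linarith
    thus "(sqrt (alg_Ssq \<eta> g T))\<^sup>2 \<le> B" using SB[of T] by simp
  qed
  have P: "\<forall>T\<ge>1. \<forall>u::'a. alg_phi \<eta> g T u \<le> sqrt B * norm u * (2 * ln (1 + 2 * norm u) + 9 * sqrt B)"
    unfolding alg_phi_def using psi_bound[OF _ S2 QB B5] by simp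
  show ?thesis using S QB P unfolding B_def by simp
qed

end
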